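(* Let $t\ge1$ be an integer, $\varepsilon\in(0,\frac12)$, and $q=\frac{88t}{\varepsilon}$ (assumed to be an integer). Suppose $f:\{0,1\}^d\to\{0,1\}$ is $\varepsilon$-far from linear, and let $x_1,\dots,x_q$ be sampled uniformly and independently from $\{0,1\}^d$. Let $Y$ be the number of pairs $(i,j)\in[q]^2$ with $i<j$ such that $f(x_i)+f(x_j)\neq f(x_i\oplus x_j)$ (mod 2). Then $\Pr\big[Y\le\frac\varepsilon4\binom q2\big]\le 0.25$.
   Context: $\oplus$ denotes bitwise XOR. $f:\{0,1\}^d\to\{0,1\}$ is linear if there is $S\subseteq[d]$ with $f(x)=\sum_{i\in S}x[i]\bmod 2$; $f$ is $\varepsilon$-far from linear if it differs from every linear function on at least an $\varepsilon$ fraction of $\{0,1\}^d$. *)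

theory Defs
  imports "HOL-Probability.Probability"
begin

text \<open>The Boolean cube {0,1}^d, points as bool lists of length d (True = 1).\<close>
definition cube :: "nat \<Rightarrow> bool list set" where
  "cube d = {x. length x = d}"

definition xorv :: "bool list \<Rightarrow> bool list \<Rightarrow> bool list" where
  "xorv x y = map2 (\<noteq>) x y"

definition lin_fun :: "nat set \<Rightarrow> bool list \<Rightarrow> bool" where
  "lin_fun S x = odd (card {i\<in>S. x ! i})"

definition is_linear :: "nat \<Rightarrow> (bool list \<Rightarrow> bool) \<Rightarrow> bool" where
  "is_linear d g \<longleftrightarrow> (\<exists>S\<subseteq>{..<d}. \<forall>x\<in>cube d. g x = lin_fun S x)"

definition eps_far_from_linear :: "nat \<Rightarrow> real \<Rightarrow> (bool list \<Rightarrow> bool) \<Rightarrow> bool" where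
  "eps_far_from_linear d \<epsilon> f \<longleftrightarrow>
     (\<forall>g. is_linear d g \<longrightarrow> real (card {x\<in>cube d. f x \<noteq> g x}) \<ge> \<epsilon> * 2 ^ d)"

definition violations :: "(bool list \<Rightarrow> bool) \<Rightarrow> nat \<Rightarrow> (nat \<Rightarrow> bool list) \<Rightarrow> nat" where
  "violations f q xs = card {(i, j). i < j \<and> j < q \<and>
      ((f (xs i) \<noteq> f (xs j)) \<noteq> f (xorv (xs i) (xs j)))}"

end

theory Submission
  imports Defs
begin


fun ip :: "bool list \<Rightarrow> bool list \<Rightarrow> bool" where
  "ip (a#s) (b#x) = ((a \<and> b) \<noteq> ip s x)"
| "ip _ _ = False"

definition chi :: "bool list \<Rightarrow> bool list \<Rightarrow> real" where
  "chi s x = (if ip s x then -1 else 1)"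

lemma xorv_Cons[simp]: "xorv (a#x) (b#y) = (a\<noteq>b) # xorv x y"
  by (simp add: xorv_def)

lemma xorv_Nil[simp]: "xorv [] y = []" "xorv x [] = []"
  by (simp_all add: xorv_def)

lemma chi_Cons: "chi (a#s) (b#x) = (if a \<and> b then - chi s x else chi s x)"
  by (simp add: chi_def)

lemma length_xorv[simp]: "length (xorv x y) = min (length x) (length y)"
  by (simp add: xorv_def)

lemma ip_xor: "length x = length y \<Longrightarrow> ip s (xorv x y) = (ip s x \<noteq> ip s y)"
proof (induction s arbitrary: x y)
  case Nil then show ?case by simp
next
  case (Cons a s)
  then show ?case by (cases x; cases y) auto
qed

lemma chi_xor: "length x = length y \<Longrightarrow> chi s (xorv x y) = chi s x * chi s y"
  by (simp add: chi_def ip_xor)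

lemma ip_sym: "ip s x = ip x s"
  by (induction s x rule: ip.induct) (auto elim: ip.elims)

lemma chi_sym: "chi s x = chi x s"
  by (simp add: chi_def ip_sym)

lemma cube_Suc: "cube (Suc d) = Cons True ` cube d \<union> Cons False ` cube d"
  by (auto simp: cube_def length_Suc_conv)

lemma finite_cube[simp]: "finite (cube d)"
proof -
  have "cube d = {xs. set xs \<subseteq> UNIV \<and> length xs = d}" by (auto simp: cube_def)
  then show ?thesis using finite_lists_length_eq[of "UNIV::bool set"] by simp
qed

lemma card_cube: "card (cube d) = 2^d"
proof -
  have "cube d = {xs. set xs \<subseteq> UNIV \<and> length xs = d}" by (auto simp: cube_def)
  then show ?thesis using card_lists_length_eq[of "UNIV::bool set"] by simp
qed

lemma sum_chi: "s \<in> cube d \<Longrightarrow> (\<Sum>x\<in>cube d. chi s x) = (if s = replicate d False then 2^d else 0)"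
proof (induction d arbitrary: s)
  case 0 then show ?case by (simp add: cube_def chi_def)
next
  case (Suc d)
  then obtain a s' where s: "s = a # s'" "s' \<in> cube d" by (cases s) (auto simp: cube_def)
  have "(\<Sum>x\<in>cube (Suc d). chi s x) = (\<Sum>x\<in>Cons True ` cube d. chi s x) + (\<Sum>x\<in>Cons False ` cube d. chi s x)"
    unfolding cube_Suc by (rule sum.union_disjoint) auto
  also have "\<dots> = (\<Sum>x\<in>cube d. chi s (True # x)) + (\<Sum>x\<in>cube d. chi s (False # x))"
    by (simp add: sum.reindex)
  also have "\<dots> = (\<Sum>x\<in>cube d. (if a then -1 else 1) * chi s' x) + (\<Sum>x\<in>cube d. chi s' x)"
    by (simp add: s chi_Cons)
  finally show ?case using Suc.IH[OF s(2)] s by (auto simp: sum_distrib_left[symmetric])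
qed

lemma sum_chi2: "x \<in> cube d \<Longrightarrow> (\<Sum>s\<in>cube d. chi s x) = (if x = replicate d False then 2^d else 0)"
  using sum_chi[of x d] by (simp add: chi_sym)

lemma xorv_zero: "length x = length y \<Longrightarrow> (xorv x y = replicate (length x) False) = (x = y)"
proof (induction x arbitrary: y)
  case Nil then show ?case by simp
next
  case (Cons a x) then show ?case by (cases y) auto
qed

lemma xorv_cube: "x \<in> cube d \<Longrightarrow> y \<in> cube d \<Longrightarrow> xorv x y \<in> cube d"
  by (simp add: cube_def)

lemma ip_card: "length s = length x \<Longrightarrow> ip s x = odd (card {i. i < length s \<and> s!i \<and> x!i})"
proof (induction s arbitrary: x)
  case Nil then show ?case by simp
next
  case (Cons a s)
  then obtain b x' where x: "x = b # x'" "length x' = length s" by (cases x) auto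
  let ?A = "{i. i < length s \<and> s!i \<and> x'!i}"
  have eq: "{i. i < length (a#s) \<and> (a#s)!i \<and> x!i} = (if a \<and> b then {0} else {}) \<union> Suc ` ?A"
  proof (intro set_eqI iffI)
    fix i assume "i \<in> {i. i < length (a#s) \<and> (a#s)!i \<and> x!i}"
    then show "i \<in> (if a \<and> b then {0} else {}) \<union> Suc ` ?A"
      by (cases i) (auto simp: x)
  next
    fix i assume "i \<in> (if a \<and> b then {0} else {}) \<union> Suc ` ?A"
    then show "i \<in> {i. i < length (a#s) \<and> (a#s)!i \<and> x!i}"
      by (auto simp: x split: if_splits)
  qed
  have fin: "finite ?A" by simp
  have c: "card (Suc ` ?A) = card ?A" by (simp add: card_image)
  have "card {i. i < length (a#s) \<and> (a#s)!i \<and> x!i} = (if a \<and> b then 1 else 0) + card ?A"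
    unfolding eq using fin c by (auto simp: card_insert_if)
  moreover have "ip (a#s) x = ((a \<and> b) \<noteq> odd (card ?A))"
    using Cons.IH[OF x(2)[symmetric]] by (simp add: x)
  ultimately show ?case by auto
qed

definition Fs :: "(bool list \<Rightarrow> bool) \<Rightarrow> bool list \<Rightarrow> real" where
  "Fs f x = (if f x then -1 else 1)"

definition Fh :: "nat \<Rightarrow> (bool list \<Rightarrow> bool) \<Rightarrow> bool list \<Rightarrow> real" where
  "Fh d f s = (\<Sum>x\<in>cube d. Fs f x * chi s x)"

lemma cube_len: "x \<in> cube d \<Longrightarrow> length x = d" by (simp add: cube_def)

lemma inversion:
  assumes z: "z \<in> cube d"
  shows "(\<Sum>s\<in>cube d. Fh d f s * chi s z) = 2^d * Fs f z"
proof -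
  have "(\<Sum>s\<in>cube d. Fh d f s * chi s z) = (\<Sum>s\<in>cube d. \<Sum>x\<in>cube d. Fs f x * chi s (xorv x z))"
    unfolding Fh_def sum_distrib_right
    using z by (intro sum.cong refl) (auto simp: chi_xor cube_def mult.assoc)
  also have "\<dots> = (\<Sum>x\<in>cube d. Fs f x * (\<Sum>s\<in>cube d. chi s (xorv x z)))"
    by (subst sum.swap) (simp add: sum_distrib_left)
  also have "\<dots> = (\<Sum>x\<in>cube d. Fs f x * (if x = z then 2^d else 0))"
    apply (intro sum.cong refl)
    apply (subst sum_chi2[OF xorv_cube[OF _ z]], assumption)
    using xorv_zero[of _ z] z by (auto simp: cube_len)
  also have "\<dots> = 2^d * Fs f z"
    using z by (simp add: if_distrib sum.delta' cong: if_cong)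
  finally show ?thesis .
qed

lemma sum_chi_xor:
  assumes "x \<in> cube d" "y \<in> cube d"
  shows "(\<Sum>s\<in>cube d. chi s x * chi s y) = (if x = y then 2^d else 0)"
proof -
  have "(\<Sum>s\<in>cube d. chi s x * chi s y) = (\<Sum>s\<in>cube d. chi s (xorv x y))"
    using assms by (simp add: chi_xor cube_len)
  also have "\<dots> = (if x = y then 2^d else 0)"
    using sum_chi2[OF xorv_cube[OF assms]] xorv_zero[of x y] assms by (auto simp: cube_len)
  finally show ?thesis .
qed

lemma swap3: "(\<Sum>x\<in>A. \<Sum>y\<in>B. \<Sum>s\<in>C. g x y s) = (\<Sum>s\<in>C. \<Sum>x\<in>A. \<Sum>y\<in>B. g x y s)"
proof -
  have "(\<Sum>x\<in>A. \<Sum>y\<in>B. \<Sum>s\<in>C. g x y s) = (\<Sum>x\<in>A. \<Sum>s\<in>C. \<Sum>y\<in>B. g x y s)"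
    by (rule sum.cong[OF refl], rule sum.swap)
  also have "\<dots> = (\<Sum>s\<in>C. \<Sum>x\<in>A. \<Sum>y\<in>B. g x y s)" by (rule sum.swap)
  finally show ?thesis .
qed

lemma triple:
  "2^d * (\<Sum>x\<in>cube d. \<Sum>y\<in>cube d. Fs f x * Fs f y * Fs f (xorv x y)) = (\<Sum>s\<in>cube d. Fh d f s ^ 3)"
proof -
  have "2^d * (\<Sum>x\<in>cube d. \<Sum>y\<in>cube d. Fs f x * Fs f y * Fs f (xorv x y))
     = (\<Sum>x\<in>cube d. \<Sum>y\<in>cube d. Fs f x * Fs f y * (2^d * Fs f (xorv x y)))"
    by (simp add: sum_distrib_left mult_ac)
  also have "\<dots> = (\<Sum>x\<in>cube d. \<Sum>y\<in>cube d. Fs f x * Fs f y * (\<Sum>s\<in>cube d. Fh d f s * chi s x * chi s y))"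
    apply (intro sum.cong refl)
    apply (subst inversion[symmetric], simp add: xorv_cube)
    by (simp add: chi_xor cube_len mult.assoc)
  also have "\<dots> = (\<Sum>x\<in>cube d. \<Sum>y\<in>cube d. \<Sum>s\<in>cube d. Fh d f s * (Fs f x * chi s x) * (Fs f y * chi s y))"
    by (simp add: sum_distrib_left mult_ac)
  also have "\<dots> = (\<Sum>s\<in>cube d. \<Sum>x\<in>cube d. \<Sum>y\<in>cube d. Fh d f s * (Fs f x * chi s x) * (Fs f y * chi s y))"
    by (rule swap3)
  also have "\<dots> = (\<Sum>s\<in>cube d. Fh d f s * (\<Sum>x\<in>cube d. Fs f x * chi s x) * (\<Sum>y\<in>cube d. Fs f y * chi s y))"
  proof (intro sum.cong refl)
    fix s
    have "Fh d f s * (\<Sum>x\<in>cube d. Fs f x * chi s x) * (\<Sum>y\<in>cube d. Fs f y * chi s y)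
       = Fh d f s * ((\<Sum>x\<in>cube d. Fs f x * chi s x) * (\<Sum>y\<in>cube d. Fs f y * chi s y))"
      by (simp only: mult.assoc)
    also have "\<dots> = Fh d f s * (\<Sum>x\<in>cube d. \<Sum>y\<in>cube d. (Fs f x * chi s x) * (Fs f y * chi s y))"
      by (simp only: sum_product)
    also have "\<dots> = (\<Sum>x\<in>cube d. \<Sum>y\<in>cube d. Fh d f s * (Fs f x * chi s x) * (Fs f y * chi s y))"
      by (simp only: sum_distrib_left mult.assoc)
    finally show "(\<Sum>x\<in>cube d. \<Sum>y\<in>cube d. Fh d f s * (Fs f x * chi s x) * (Fs f y * chi s y)) = Fh d f s * (\<Sum>x\<in>cube d. Fs f x * chi s x) * (\<Sum>y\<in>cube d. Fs f y * chi s y)" by simp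
  qed
  also have "\<dots> = (\<Sum>s\<in>cube d. Fh d f s ^ 3)"
    by (simp add: Fh_def power3_eq_cube)
  finally show ?thesis .
qed

lemma Fs_sq: "Fs f x * Fs f x = 1" by (simp add: Fs_def)

lemma parseval: "(\<Sum>s\<in>cube d. Fh d f s ^ 2) = 4^d"
proof -
  have "(\<Sum>s\<in>cube d. Fh d f s ^ 2) = (\<Sum>s\<in>cube d. \<Sum>x\<in>cube d. \<Sum>y\<in>cube d. Fs f x * Fs f y * (chi s x * chi s y))"
    by (simp add: Fh_def power2_eq_square sum_product mult_ac)
  also have "\<dots> = (\<Sum>x\<in>cube d. \<Sum>y\<in>cube d. Fs f x * Fs f y * (\<Sum>s\<in>cube d. chi s x * chi s y))"
    by (subst swap3[symmetric]) (simp add: sum_distrib_left)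
  also have "\<dots> = (\<Sum>x\<in>cube d. \<Sum>y\<in>cube d. Fs f x * Fs f y * (if x = y then 2^d else 0))"
    by (intro sum.cong refl) (simp add: sum_chi_xor)
  also have "\<dots> = (\<Sum>x\<in>cube d. (2::real)^d)"
    by (simp add: if_distrib sum.delta cong: if_cong) (simp add: Fs_sq)
  also have "\<dots> = 4^d" by (simp add: card_cube power_mult_distrib[symmetric])
  finally show ?thesis .
qed

lemma ip_linear: "s \<in> cube d \<Longrightarrow> is_linear d (ip s)"
  unfolding is_linear_def
proof (intro exI[of _ "{i. i < d \<and> s!i}"] conjI ballI)
  fix x assume s: "s \<in> cube d" and x: "x \<in> cube d"
  have "ip s x = odd (card {i. i < length s \<and> s!i \<and> x!i})"
    using s x by (intro ip_card) (simp add: cube_def)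
  also have "{i. i < length s \<and> s!i \<and> x!i} = {i \<in> {i. i < d \<and> s!i}. x!i}"
    using s by (auto simp: cube_def)
  finally show "ip s x = lin_fun {i. i < d \<and> s!i} x" by (simp add: lin_fun_def)
qed auto

lemma Fh_bound:
  assumes far: "eps_far_from_linear d \<epsilon> f" and s: "s \<in> cube d"
  shows "Fh d f s \<le> 2^d * (1 - 2*\<epsilon>)"
proof -
  have "Fh d f s = (\<Sum>x\<in>cube d. 1 - 2 * (if f x \<noteq> ip s x then 1 else 0))"
    unfolding Fh_def by (intro sum.cong refl) (auto simp: Fs_def chi_def)
  also have "\<dots> = 2^d - 2 * real (card {x\<in>cube d. f x \<noteq> ip s x})"
    by (simp add: sum_subtractf sum_distrib_left[symmetric] card_cube sum.If_cases
        flip: sum_distrib_left) (simp add: Int_def conj_commute)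
  finally have eq: "Fh d f s = 2^d - 2 * real (card {x\<in>cube d. f x \<noteq> ip s x})" .
  have "real (card {x\<in>cube d. f x \<noteq> ip s x}) \<ge> \<epsilon> * 2^d"
    using far ip_linear[OF s] unfolding eps_far_from_linear_def by blast
  then show ?thesis unfolding eq by (simp add: algebra_simps)
qed

lemma blr:
  assumes far: "eps_far_from_linear d \<epsilon> f"
  shows "(\<Sum>x\<in>cube d. \<Sum>y\<in>cube d. (if (f x \<noteq> f y) \<noteq> f (xorv x y) then 1 else 0)) \<ge> \<epsilon> * 4^d"
proof -
  define T where "T = (\<Sum>x\<in>cube d. \<Sum>y\<in>cube d. Fs f x * Fs f y * Fs f (xorv x y))"
  define M :: real where "M = 2^d * (1 - 2*\<epsilon>)"
  have "2^d * T = (\<Sum>s\<in>cube d. Fh d f s ^ 3)" unfolding T_def by (rule triple)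
  also have "\<dots> \<le> (\<Sum>s\<in>cube d. M * Fh d f s ^ 2)"
  proof (rule sum_mono)
    fix s assume s: "s \<in> cube d"
    have "Fh d f s * Fh d f s ^ 2 \<le> M * Fh d f s ^ 2"
      using Fh_bound[OF far s] unfolding M_def by (intro mult_right_mono) auto
    then show "Fh d f s ^ 3 \<le> M * Fh d f s ^ 2" by (simp add: power3_eq_cube power2_eq_square)
  qed
  also have "\<dots> = M * 4^d" by (simp add: sum_distrib_left[symmetric] parseval)
  finally have "2^d * T \<le> 2^d * (1 - 2*\<epsilon>) * 4^d" unfolding M_def .
  then have T: "T \<le> (1 - 2*\<epsilon>) * 4^d" by (simp add: mult.assoc)
  have "(\<Sum>x\<in>cube d. \<Sum>y\<in>cube d. (if (f x \<noteq> f y) \<noteq> f (xorv x y) then 1 else 0))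
      = (\<Sum>x\<in>cube d. \<Sum>y\<in>cube d. (1 - Fs f x * Fs f y * Fs f (xorv x y)) / 2)"
    by (intro sum.cong refl) (auto simp: Fs_def)
  also have "\<dots> = (real (card (cube d)) * real (card (cube d)) - T) / 2"
    unfolding T_def by (simp add: sum_subtractf sum_divide_distrib[symmetric] diff_divide_distrib)
  also have "real (card (cube d)) * real (card (cube d)) = 4^d"
    by (simp add: card_cube power_mult_distrib[symmetric])
  finally show ?thesis using T by (simp add: algebra_simps)
qed



lemma sum_PiE_insert:
  assumes "k \<notin> I"
  shows "(\<Sum>xs\<in>PiE (insert k I) B. h xs) = (\<Sum>a\<in>B k. \<Sum>xs\<in>PiE I B. h (xs(k:=a)))"
proof -
  have "(\<Sum>xs\<in>PiE (insert k I) B. h xs) = (\<Sum>p\<in>B k \<times> PiE I B. h ((\<lambda>(y,g). g(k:=y)) p))"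
    unfolding PiE_insert_eq by (subst sum.reindex[OF inj_combinator[OF assms]]) (simp add: o_def)
  also have "\<dots> = (\<Sum>a\<in>B k. \<Sum>xs\<in>PiE I B. h (xs(k:=a)))"
    by (simp add: sum.cartesian_product case_prod_unfold)
  finally show ?thesis .
qed

lemma marg2:
  fixes g :: "'a \<Rightarrow> 'a \<Rightarrow> real"
  assumes "i < q" "j < q" "i \<noteq> j" "finite C"
  shows "(\<Sum>xs\<in>PiE {..<q} (\<lambda>_. C). g (xs i) (xs j)) = real (card C)^(q-2) * (\<Sum>x\<in>C. \<Sum>y\<in>C. g x y)"
proof -
  define R where "R = {..<q} - {i,j}"
  have U: "{..<q} = insert i (insert j R)" and ni: "i \<notin> insert j R" and nj: "j \<notin> R"
    using assms by (auto simp: R_def)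
  have fR: "finite R" by (simp add: R_def)
  have cR: "card R = q - 2" using assms by (simp add: R_def card_Diff_subset)
  have "(\<Sum>xs\<in>PiE {..<q} (\<lambda>_. C). g (xs i) (xs j))
      = (\<Sum>a\<in>C. \<Sum>b\<in>C. \<Sum>xs\<in>PiE R (\<lambda>_. C). g a b)"
    unfolding U using assms ni nj by (simp add: sum_PiE_insert)
  also have "\<dots> = (\<Sum>a\<in>C. \<Sum>b\<in>C. real (card C)^(q-2) * g a b)"
    using assms by (simp add: card_funcsetE[OF fR] R_def[symmetric] cR)
  finally show ?thesis by (simp add: sum_distrib_left)
qed

lemma marg4:
  fixes g h :: "'a \<Rightarrow> 'a \<Rightarrow> real"
  assumes "i < q" "j < q" "k < q" "l < q" "distinct [i,j,k,l]" "finite C"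
  shows "(\<Sum>xs\<in>PiE {..<q} (\<lambda>_. C). g (xs i) (xs j) * h (xs k) (xs l))
       = real (card C)^(q-4) * (\<Sum>x\<in>C. \<Sum>y\<in>C. g x y) * (\<Sum>x\<in>C. \<Sum>y\<in>C. h x y)"
proof -
  define R where "R = {..<q} - {i,j,k,l}"
  have U: "{..<q} = insert i (insert j (insert k (insert l R)))"
    and n: "i \<notin> insert j (insert k (insert l R))" "j \<notin> insert k (insert l R)"
      "k \<notin> insert l R" "l \<notin> R"
    using assms by (auto simp: R_def)
  have fR: "finite R" by (simp add: R_def)
  have cR: "card R = q - 4" using assms by (simp add: R_def card_Diff_subset)
  have "(\<Sum>xs\<in>PiE {..<q} (\<lambda>_. C). g (xs i) (xs j) * h (xs k) (xs l))
      = (\<Sum>a\<in>C. \<Sum>b\<in>C. \<Sum>c\<in>C. \<Sum>e\<in>C. \<Sum>xs\<in>PiE R (\<lambda>_. C). g a b * h c e)"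
    unfolding U using assms n by (simp add: sum_PiE_insert)
  also have "\<dots> = (\<Sum>a\<in>C. \<Sum>b\<in>C. \<Sum>c\<in>C. \<Sum>e\<in>C. real (card C)^(q-4) * (g a b * h c e))"
    using assms by (simp add: card_funcsetE[OF fR] R_def[symmetric] cR)
  also have "\<dots> = (\<Sum>a\<in>C. \<Sum>b\<in>C. g a b * (real (card C)^(q-4) * (\<Sum>x\<in>C. \<Sum>y\<in>C. h x y)))"
    by (intro sum.cong refl) (simp add: sum_distrib_left sum_distrib_right mult_ac)
  also have "\<dots> = (\<Sum>x\<in>C. \<Sum>y\<in>C. g x y) * (real (card C)^(q-4) * (\<Sum>x\<in>C. \<Sum>y\<in>C. h x y))"
    by (simp only: sum_distrib_right)
  finally show ?thesis by (simp only: mult_ac)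
qed

lemma pairs_eq: "{(i::nat,j). i < j \<and> j < q} \<subseteq> {..<q} \<times> {..<q}" by auto

lemma finite_pairs: "finite {(i::nat,j). i < j \<and> j < q}"
  by (rule finite_subset[OF pairs_eq]) auto

lemma card_pairs: "card {(i::nat,j). i < j \<and> j < q} = q choose 2"
proof (induction q)
  case 0 then show ?case by simp
next
  case (Suc q)
  have eq: "{(i::nat,j). i < j \<and> j < Suc q} = {(i,j). i < j \<and> j < q} \<union> (\<lambda>i. (i,q)) ` {..<q}"
    by (auto simp: less_Suc_eq)
  have "card ({(i::nat,j). i < j \<and> j < q} \<union> (\<lambda>i. (i,q)) ` {..<q}) = card {(i::nat,j). i < j \<and> j < q} + card ((\<lambda>i. (i,q)) ` {..<q})"
    by (rule card_Un_disjoint) (auto simp: finite_pairs)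
  also have "card ((\<lambda>i. (i,q)) ` {..<q}) = q" by (simp add: card_image inj_on_def)
  finally show ?case using Suc by (simp add: eq numeral_2_eq_2)
qed

lemma card_nondisj:
  assumes a: "a \<in> {(i::nat,j). i < j \<and> j < q}"
  shows "card {b \<in> {(i,j). i < j \<and> j < q}. \<not> distinct [fst a, snd a, fst b, snd b]} \<le> 4 * q"
proof -
  obtain i j where ij: "a = (i,j)" "i < j" "j < q" using a by auto
  have "{b \<in> {(i,j). i < j \<and> j < q}. \<not> distinct [fst a, snd a, fst b, snd b]}
      \<subseteq> ({i,j} \<times> {..<q}) \<union> ({..<q} \<times> {i,j})"
    using ij by auto
  then have "card {b \<in> {(i,j). i < j \<and> j < q}. \<not> distinct [fst a, snd a, fst b, snd b]}
      \<le> card (({i,j} \<times> {..<q}) \<union> ({..<q} \<times> {i,j}))"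
    by (intro card_mono) auto
  also have "\<dots> \<le> card ({i,j} \<times> {..<q}) + card ({..<q} \<times> {i,j})" by (rule card_Un_le)
  also have "\<dots> \<le> 2*q + q*2"
    by (intro add_mono) (simp_all add: card_cartesian_product card_insert_if)
  finally show ?thesis by simp
qed

lemma cheb:
  fixes C :: "'a set" and V :: "'a \<Rightarrow> 'a \<Rightarrow> real" and q :: nat and \<epsilon> :: real
  assumes finC: "finite C" and ne: "C \<noteq> {}"
    and V0: "\<And>x y. 0 \<le> V x y" and V1: "\<And>x y. V x y \<le> 1"
    and pe: "\<epsilon> * real (card C)^2 \<le> (\<Sum>x\<in>C. \<Sum>y\<in>C. V x y)"
    and e0: "0 < \<epsilon>" and eh: "\<epsilon> < 1/2" and qe: "88 \<le> real q * \<epsilon>"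
  shows "real (card {xs \<in> PiE {..<q} (\<lambda>_. C).
            (\<Sum>a\<in>{(i,j). i < j \<and> j < q}. V (xs (fst a)) (xs (snd a))) \<le> \<epsilon> / 4 * real (q choose 2)})
         \<le> 1/4 * real (card (PiE {..<q} (\<lambda>_. C)))"
proof -
  define \<Omega> where "\<Omega> = PiE {..<q} (\<lambda>_. C)"
  define P where "P = {(i::nat,j). i < j \<and> j < q}"
  define n where "n = real (card C)"
  define W where "W = n ^ q"
  define S1 where "S1 = (\<Sum>x\<in>C. \<Sum>y\<in>C. V x y)"
  define p where "p = S1 / n^2"
  define N where "N = real (q choose 2)"
  define Y where "Y xs = (\<Sum>a\<in>P. V (xs (fst a)) (xs (snd a)))" for xs
  define \<mu> where "\<mu> = N * p"
  have n0: "n > 0" using finC ne by (simp add: n_def card_gt_0_iff)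
  have W0: "W > 0" using n0 by (simp add: W_def)
  have cardO: "real (card \<Omega>) = W" by (simp add: \<Omega>_def W_def n_def card_funcsetE)
  have finO: "finite \<Omega>" using finC by (simp add: \<Omega>_def finite_PiE)
  have finP: "finite P" unfolding P_def by (rule finite_pairs)
  have cardP: "real (card P) = N" by (simp add: P_def N_def card_pairs)
  have S1: "S1 = p * n^2" using n0 by (simp add: p_def)
  have pe': "\<epsilon> \<le> p" using pe n0 by (simp add: p_def S1_def field_simps n_def)
  have p0: "p > 0" using pe' e0 by linarith
  have q176: "real q \<ge> 176"
  proof -
    have "88 \<le> real q * \<epsilon>" by (rule qe)
    also have "\<dots> \<le> real q * (1/2)" using eh by (intro mult_left_mono) auto
    finally show ?thesis by simp
  qed
  then have q4: "q \<ge> 4" by simp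
  have Nq: "N = real q * (real q - 1) / 2"
  proof -
    have "even (q * (q - 1))" by auto
    then have "real (q * (q - 1) div 2) = real (q * (q-1)) / 2"
      by (simp add: real_of_nat_div)
    then show ?thesis using q4 by (simp add: N_def choose_two of_nat_diff)
  qed
  have E1: "(\<Sum>xs\<in>\<Omega>. V (xs (fst a)) (xs (snd a))) = W * p" if "a \<in> P" for a
  proof -
    have "(\<Sum>xs\<in>\<Omega>. V (xs (fst a)) (xs (snd a))) = n^(q-2) * S1"
      using that finC unfolding \<Omega>_def P_def n_def S1_def by (intro marg2) auto
    also have "\<dots> = p * (n^(q-2) * n^2)" by (simp add: S1 mult_ac)
    also have "n^(q-2) * n^2 = W"
    proof -
      have "q - 2 + 2 = q" using q4 by simp
      then show ?thesis unfolding W_def by (metis power_add)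
    qed
    finally show ?thesis by simp
  qed
  have SY: "(\<Sum>xs\<in>\<Omega>. Y xs) = N * W * p"
  proof -
    have "(\<Sum>xs\<in>\<Omega>. Y xs) = (\<Sum>a\<in>P. \<Sum>xs\<in>\<Omega>. V (xs (fst a)) (xs (snd a)))"
      unfolding Y_def by (rule sum.swap)
    also have "\<dots> = (\<Sum>a\<in>P. W * p)" by (intro sum.cong refl E1)
    finally show ?thesis using cardP by simp
  qed
  have E2: "(\<Sum>xs\<in>\<Omega>. V (xs (fst a)) (xs (snd a)) * V (xs (fst b)) (xs (snd b)))
      \<le> W * p^2 + (if distinct [fst a, snd a, fst b, snd b] then 0 else W * p)"
    if a: "a \<in> P" and b: "b \<in> P" for a b
  proof (cases "distinct [fst a, snd a, fst b, snd b]")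
    case True
    have "(\<Sum>xs\<in>\<Omega>. V (xs (fst a)) (xs (snd a)) * V (xs (fst b)) (xs (snd b))) = n^(q-4) * S1 * S1"
      using a b finC True unfolding \<Omega>_def P_def n_def S1_def by (intro marg4) auto
    also have "\<dots> = p^2 * (n^(q-4) * n^4)" by (simp add: S1 power2_eq_square mult_ac power4_eq_xxxx)
    also have "n^(q-4) * n^4 = W"
    proof -
      have "q - 4 + 4 = q" using q4 by simp
      then show ?thesis unfolding W_def by (metis power_add)
    qed
    finally show ?thesis using True by simp
  next
    case False
    have "(\<Sum>xs\<in>\<Omega>. V (xs (fst a)) (xs (snd a)) * V (xs (fst b)) (xs (snd b)))
        \<le> (\<Sum>xs\<in>\<Omega>. V (xs (fst a)) (xs (snd a)))"
      by (intro sum_mono) (simp add: V0 V1 mult_left_le)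
    also have "\<dots> = W * p" using E1[OF a] .
    also have "\<dots> \<le> W * p^2 + W * p" using W0 by simp
    finally show ?thesis unfolding if_not_P[OF False] .
  qed
  have SY2: "(\<Sum>xs\<in>\<Omega>. Y xs ^ 2) \<le> N * N * W * p^2 + 4 * real q * N * W * p"
  proof -
    have "(\<Sum>xs\<in>\<Omega>. Y xs ^ 2) = (\<Sum>xs\<in>\<Omega>. \<Sum>a\<in>P. \<Sum>b\<in>P. V (xs (fst a)) (xs (snd a)) * V (xs (fst b)) (xs (snd b)))"
      unfolding Y_def by (simp add: power2_eq_square sum_product)
    also have "\<dots> = (\<Sum>a\<in>P. \<Sum>b\<in>P. \<Sum>xs\<in>\<Omega>. V (xs (fst a)) (xs (snd a)) * V (xs (fst b)) (xs (snd b)))"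
    proof -
      have "(\<Sum>xs\<in>\<Omega>. \<Sum>a\<in>P. \<Sum>b\<in>P. V (xs (fst a)) (xs (snd a)) * V (xs (fst b)) (xs (snd b)))
          = (\<Sum>a\<in>P. \<Sum>xs\<in>\<Omega>. \<Sum>b\<in>P. V (xs (fst a)) (xs (snd a)) * V (xs (fst b)) (xs (snd b)))"
        by (rule sum.swap)
      also have "\<dots> = (\<Sum>a\<in>P. \<Sum>b\<in>P. \<Sum>xs\<in>\<Omega>. V (xs (fst a)) (xs (snd a)) * V (xs (fst b)) (xs (snd b)))"
        by (intro sum.cong refl sum.swap)
      finally show ?thesis .
    qed
    also have "\<dots> \<le> (\<Sum>a\<in>P. \<Sum>b\<in>P. W * p^2 + (if distinct [fst a, snd a, fst b, snd b] then 0 else W * p))"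
      by (intro sum_mono E2)
    also have "\<dots> \<le> (\<Sum>a\<in>P. N * W * p^2 + 4 * real q * W * p)"
    proof (intro sum_mono)
      fix a assume a: "a \<in> P"
      have "(\<Sum>b\<in>P. W * p^2 + (if distinct [fst a, snd a, fst b, snd b] then 0 else W * p))
          = N * W * p^2 + W * p * real (card {b\<in>P. \<not> distinct [fst a, snd a, fst b, snd b]})"
        using finP cardP by (simp add: sum.distrib sum.If_cases Int_def conj_commute)
      moreover have "real (card {b\<in>P. \<not> distinct [fst a, snd a, fst b, snd b]}) \<le> 4 * real q"
        using card_nondisj[of a q] a unfolding P_def by (simp add: of_nat_le_iff[symmetric])
      then have "W * p * real (card {b\<in>P. \<not> distinct [fst a, snd a, fst b, snd b]}) \<le> W * p * (4 * real q)"
        using W0 p0 by (intro mult_left_mono) auto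
      ultimately show "(\<Sum>b\<in>P. W * p^2 + (if distinct [fst a, snd a, fst b, snd b] then 0 else W * p))
          \<le> N * W * p^2 + 4 * real q * W * p"
        by (simp add: mult_ac)
    qed
    also have "\<dots> = N * N * W * p^2 + 4 * real q * N * W * p" using cardP by (simp add: algebra_simps)
    finally show ?thesis .
  qed
  have Var: "(\<Sum>xs\<in>\<Omega>. (Y xs - \<mu>)^2) \<le> 4 * real q * N * W * p"
  proof -
    have "(\<Sum>xs\<in>\<Omega>. (Y xs - \<mu>)^2) = (\<Sum>xs\<in>\<Omega>. Y xs ^ 2) - 2 * \<mu> * (\<Sum>xs\<in>\<Omega>. Y xs) + \<mu>^2 * real (card \<Omega>)"
      by (simp add: power2_diff sum.distrib sum_subtractf sum_distrib_left[symmetric] sum_distrib_right[symmetric] mult_ac)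
    then show ?thesis using SY2 SY cardO by (simp add: \<mu>_def power2_eq_square algebra_simps)
  qed
  define B where "B = {xs \<in> \<Omega>. Y xs \<le> \<epsilon> / 4 * N}"
  have finB: "finite B" using finO by (simp add: B_def)
  have Npos: "N > 0"
  proof -
    have "real q * (real q - 1) > 0" using q176 by (intro mult_pos_pos) auto
    then show ?thesis using Nq by simp
  qed
  have mu0: "\<mu> > 0" using p0 Npos by (simp add: \<mu>_def)
  have "real (card B) * (3/4 * \<mu>)^2 = (\<Sum>xs\<in>B. (3/4 * \<mu>)^2)" by simp
  also have "\<dots> \<le> (\<Sum>xs\<in>B. (Y xs - \<mu>)^2)"
  proof (rule sum_mono)
    fix xs assume "xs \<in> B"
    then have "Y xs \<le> \<epsilon> / 4 * N" by (simp add: B_def)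
    also have "\<dots> \<le> p / 4 * N" using pe' Npos by (intro mult_right_mono) auto
    finally have "3/4 * \<mu> \<le> \<mu> - Y xs" by (simp add: \<mu>_def mult.commute)
    then show "(3/4 * \<mu>)^2 \<le> (Y xs - \<mu>)^2"
      using mu0 by (simp add: power2_commute[of "Y xs"] power_mono)
  qed
  also have "\<dots> \<le> (\<Sum>xs\<in>\<Omega>. (Y xs - \<mu>)^2)"
    by (rule sum_mono2[OF finO]) (auto simp: B_def)
  also have "\<dots> \<le> 4 * real q * N * W * p" by (rule Var)
  finally have key0: "real (card B) * (3/4 * \<mu>)^2 \<le> 4 * real q * N * W * p" .
  have e: "(3/4 * \<mu>)^2 = 9/16 * \<mu>^2" by (simp add: power2_eq_square)
  have key: "real (card B) * (9/16 * \<mu>^2) \<le> 4 * real q * N * W * p" using key0 unfolding e .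
  have "real (card B) \<le> 1/4 * W"
  proof -
    have "real (card B) * (9/16 * N * p) \<le> 4 * real q * W"
    proof -
      have "real (card B) * (9/16 * N * p) * (N * p) \<le> 4 * real q * W * (N * p)"
        using key by (simp add: \<mu>_def power2_eq_square mult_ac)
      then show ?thesis using Npos p0 by (simp add: mult_le_cancel_right)
    qed
    then have "real q * (real (card B) * (9/32 * (real q - 1) * p)) \<le> real q * (4 * W)"
      unfolding Nq by (simp add: mult_ac)
    then have "real (card B) * (9/32 * (real q - 1) * p) \<le> 4 * W"
      using q176 by (simp add: mult_le_cancel_left)
    moreover have "9/32 * (real q - 1) * p \<ge> 16"
    proof -
      have "(real q - 1) * p \<ge> (real q - 1) * \<epsilon>" using pe' q176 by (intro mult_left_mono) auto
      moreover have "(real q - 1) * \<epsilon> \<ge> 87" using qe eh by (simp add: algebra_simps)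
      ultimately show ?thesis by (simp add: algebra_simps)
    qed
    ultimately have "real (card B) * 16 \<le> 4 * W"
      by (meson order_trans mult_left_mono of_nat_0_le_iff)
    then show ?thesis by simp
  qed
  then show ?thesis unfolding B_def Y_def \<Omega>_def P_def N_def cardO[unfolded \<Omega>_def] .
qed


lemma card_viol:
  "real (card {(i, j). i < j \<and> j < q \<and> Q i j})
     = (\<Sum>a\<in>{(i::nat,j). i < j \<and> j < q}. (if Q (fst a) (snd a) then 1 else 0 :: real))"
proof -
  have "{(i, j). i < j \<and> j < q \<and> Q i j} = {a \<in> {(i::nat,j). i < j \<and> j < q}. Q (fst a) (snd a)}"
    by auto
  then show ?thesis using finite_pairs[of q]
    by (simp add: sum.inter_filter[symmetric])
qed

theorem lemmaB2:
  fixes t q d :: nat and \<epsilon> :: real and f :: "bool list \<Rightarrow> bool"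
  assumes "t \<ge> 1" and "0 < \<epsilon>" and "\<epsilon> < 1/2"
    and "real q = 88 * real t / \<epsilon>"
    and "eps_far_from_linear d \<epsilon> f"
  shows "measure_pmf.prob (pmf_of_set (PiE {..<q} (\<lambda>_. cube d)))
           {xs. real (violations f q xs) \<le> \<epsilon> / 4 * real (q choose 2)} \<le> 0.25"
proof -
  define V where "V x y = (if (f x \<noteq> f y) \<noteq> f (xorv x y) then 1 else 0 :: real)" for x y
  define \<Omega> where "\<Omega> = PiE {..<q} (\<lambda>_. cube d)"
  have ne: "cube d \<noteq> {}" by (auto simp: cube_def intro: exI[of _ "replicate d False"])
  have neO: "\<Omega> \<noteq> {}" using ne by (simp add: \<Omega>_def PiE_eq_empty_iff)
  have finO: "finite \<Omega>" by (simp add: \<Omega>_def finite_PiE)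
  have qe: "88 \<le> real q * \<epsilon>" using assms(1,2,4) by simp
  have pe: "\<epsilon> * real (card (cube d))^2 \<le> (\<Sum>x\<in>cube d. \<Sum>y\<in>cube d. V x y)"
  proof -
    have c4: "real (card (cube d))^2 = (4::real)^d"
      by (simp add: card_cube power2_eq_square power_mult_distrib[symmetric])
    show ?thesis unfolding c4 using blr[OF assms(5)] by (simp add: V_def)
  qed
  have viol: "real (violations f q xs) = (\<Sum>a\<in>{(i,j). i < j \<and> j < q}. V (xs (fst a)) (xs (snd a)))" for xs
    unfolding violations_def card_viol V_def ..
  have main: "real (card {xs \<in> \<Omega>.
            (\<Sum>a\<in>{(i,j). i < j \<and> j < q}. V (xs (fst a)) (xs (snd a))) \<le> \<epsilon> / 4 * real (q choose 2)})
         \<le> 1/4 * real (card \<Omega>)"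
    unfolding \<Omega>_def
    by (rule cheb[OF finite_cube ne _ _ pe assms(2,3) qe]) (auto simp: V_def)
  have "measure_pmf.prob (pmf_of_set \<Omega>) {xs. real (violations f q xs) \<le> \<epsilon> / 4 * real (q choose 2)}
      = real (card (\<Omega> \<inter> {xs. real (violations f q xs) \<le> \<epsilon> / 4 * real (q choose 2)})) / real (card \<Omega>)"
    by (rule measure_pmf_of_set[OF neO finO])
  also have "\<Omega> \<inter> {xs. real (violations f q xs) \<le> \<epsilon> / 4 * real (q choose 2)}
      = {xs \<in> \<Omega>. (\<Sum>a\<in>{(i,j). i < j \<and> j < q}. V (xs (fst a)) (xs (snd a))) \<le> \<epsilon> / 4 * real (q choose 2)}"
    by (auto simp: viol)
  also have "real (card \<dots>) / real (card \<Omega>) \<le> 1/4"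
    using main neO finO by (simp add: divide_le_eq card_gt_0_iff)
  finally show ?thesis unfolding \<Omega>_def by simp
qed

end
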